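(* In the discrete-covariate setting below, assume Assumptions T and W. Fix $C_0\ge 1$ and let $\tilde\beta_j^l(\mathbf z)$ be a minimizer of $$\sum_{k=1}^n \mathrm w_l(\mathbf z_k)\,(\beta_j^*(\mathbf z_k)-\beta)^{\mathrm T}\,\Sigma^*_{-j,-j}(\mathbf z_k)\,(\beta_j^*(\mathbf z_k)-\beta)$$ over $\{\beta\in\mathbb R^{p-1}:\|\beta\|_0\le C_0s_j^*\}$. Then there is a constant $c>0$ such that for $j=1,\dots,p$ and every subject $l$ (with $n>n_l$), $$\|\tilde\beta_j^l(\mathbf z)-\beta_j^*(\mathbf z_l)\|_2^2\le c\,\exp\!\big(-2\delta_l^2/\tau^2+2\log(n/n_l-1)\big)\,s_j^*.$$
   Context: Discrete-covariate setting. There are $n$ subjects with covariates $\mathbf z_i$ taking $K$ distinct values (levels); $n_l$ denotes the number of subjects sharing the covariate value $\mathbf z_l$ of subject $l$. $\mathbf X\in\mathbb R^{n\times p}$ has rows $\mathbf x_i$; given the covariates, the $\mathbf x_i$ are independent with $\mathbf x_i\sim\mathcal N_p(0,\Omega^*(\mathbf z_i)^{-1})$; $\Sigma^*(\mathrm z)=\Omega^*(\mathrm z)^{-1}$, $\Sigma^*_{-j,-j}$ is it with row/column $j$ removed; $\beta_j^*(\mathrm z)\in\mathbb R^{p-1}$ is the true regression coefficient of variable $j$ on the others ($\beta^*_{jk}=-\Omega^*_{kj}/\Omega^*_{jj}$), with conditional variance $\sigma_*^2$ known. Weights: $\mathrm w_l(\mathbf z_k)=c_lK((\mathbf z_k-\mathbf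 z_l)/\tau)/\tau$, $c_l>0$ constant. $\tilde\beta^l_j$ as defined is the constrained Kullback–Leibler minimizer of the weighted pseudo-likelihood. $\delta_l=\min_{k:\mathbf z_k\ne\mathbf z_l}|\mathbf z_k-\mathbf z_l|$. Assumption T: for each covariate value $\mathrm z$, $\Omega^*(\mathrm z)$ has eigenvalues bounded away from $0$ and $\infty$, and $\|\beta_j^*(\mathrm z)\|_0\le s_j^*$; $s^*=\max_js_j^*$. Assumption W: $\delta_l$ is bounded below by a positive constant for all levels; the kernel is Gaussian, $K(x)\propto e^{-x^2}$; and $\tau=c\min_l\delta_l/\sqrt{\log n}$ for some constant $c\in(0,1)$. *)

theory Defs
  imports Complex_Main "Jordan_Normal_Form.Char_Poly"
begin

text \<open>Vectors of R^{p-1} (regression of variable j on the others) are encoded as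
  functions nat => real supported on {i. i < p, i \<noteq> j}.\<close>

definition in_Rpm1 :: "nat \<Rightarrow> nat \<Rightarrow> (nat \<Rightarrow> real) \<Rightarrow> bool" where
  "in_Rpm1 p j b \<longleftrightarrow> b j = 0 \<and> (\<forall>i\<ge>p. b i = 0)"

definition l0 :: "nat \<Rightarrow> nat \<Rightarrow> (nat \<Rightarrow> real) \<Rightarrow> nat" where
  "l0 p j b = card {i. i < p \<and> i \<noteq> j \<and> b i \<noteq> 0}"

definition sqnorm :: "nat \<Rightarrow> nat \<Rightarrow> (nat \<Rightarrow> real) \<Rightarrow> real" where
  "sqnorm p j b = (\<Sum>i\<in>{i. i < p \<and> i \<noteq> j}. (b i)\<^sup>2)"

definition beta_star :: "nat \<Rightarrow> nat \<Rightarrow> real mat \<Rightarrow> (nat \<Rightarrow> real)" where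
  "beta_star p j Om = (\<lambda>k. if k < p \<and> k \<noteq> j then - (Om $$ (k, j)) / (Om $$ (j, j)) else 0)"

definition quad_mj :: "nat \<Rightarrow> nat \<Rightarrow> real mat \<Rightarrow> (nat \<Rightarrow> real) \<Rightarrow> real" where
  "quad_mj p j S d = (\<Sum>a\<in>{i. i < p \<and> i \<noteq> j}. \<Sum>b\<in>{i. i < p \<and> i \<noteq> j}. d a * S $$ (a, b) * d b)"

text \<open>Gaussian kernel weights  w_l(z_k) = c_l K((z_k - z_l)/tau)/tau,  K(x) \<propto> exp(-x^2)
  (the proportionality constant of K is absorbed into c_l)\<close>
definition wgt :: "(nat \<Rightarrow> real) \<Rightarrow> (nat \<Rightarrow> real) \<Rightarrow> real \<Rightarrow> nat \<Rightarrow> nat \<Rightarrow> real" where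
  "wgt cw z tau l k = cw l * exp (- (((z k - z l) / tau)\<^sup>2)) / tau"

definition obj :: "nat \<Rightarrow> nat \<Rightarrow> (nat \<Rightarrow> real) \<Rightarrow> (real \<Rightarrow> real mat) \<Rightarrow> (real \<Rightarrow> real mat)
    \<Rightarrow> (nat \<Rightarrow> real) \<Rightarrow> real \<Rightarrow> nat \<Rightarrow> nat \<Rightarrow> (nat \<Rightarrow> real) \<Rightarrow> real" where
  "obj n p z Om Sig cw tau j l b =
     (\<Sum>k<n. wgt cw z tau l k *
        quad_mj p j (Sig (z k)) (\<lambda>i. beta_star p j (Om (z k)) i - b i))"

definition nlev :: "nat \<Rightarrow> (nat \<Rightarrow> real) \<Rightarrow> nat \<Rightarrow> nat" where
  "nlev n z l = card {k. k < n \<and> z k = z l}"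

definition delta :: "nat \<Rightarrow> (nat \<Rightarrow> real) \<Rightarrow> nat \<Rightarrow> real" where
  "delta n z l = Min {\<bar>z k - z l\<bar> | k. k < n \<and> z k \<noteq> z l}"

end

theory Submission
  imports Defs "HOL-Analysis.Function_Topology"
begin

definition Bf :: "nat \<Rightarrow> (nat \<Rightarrow> nat \<Rightarrow> real) \<Rightarrow> (nat \<Rightarrow> real) \<Rightarrow> (nat \<Rightarrow> real) \<Rightarrow> real" where
  "Bf p M u v = (\<Sum>a<p. \<Sum>b<p. u a * M a b * v b)"
definition Nf :: "nat \<Rightarrow> (nat \<Rightarrow> real) \<Rightarrow> real" where
  "Nf p x = (\<Sum>a<p. (x a)\<^sup>2)"
definition Mv :: "nat \<Rightarrow> (nat \<Rightarrow> nat \<Rightarrow> real) \<Rightarrow> (nat \<Rightarrow> real) \<Rightarrow> nat \<Rightarrow> real" where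
  "Mv p M x = (\<lambda>a. \<Sum>b<p. M a b * x b)"

lemma Nf_nonneg: "0 \<le> Nf p x"
  unfolding Nf_def by (simp add: sum_nonneg)

lemma Nf_zero: "Nf p x = 0 \<Longrightarrow> a < p \<Longrightarrow> x a = 0"
  unfolding Nf_def using sum_nonneg_eq_0_iff[of "{..<p}" "\<lambda>a. (x a)\<^sup>2"] by auto

lemma Bf_Mv: "Bf p M y x = (\<Sum>a<p. y a * Mv p M x a)"
  unfolding Bf_def Mv_def by (simp add: sum_distrib_left mult.assoc)

lemma Bf_sym: assumes "\<forall>a<p. \<forall>b<p. M a b = M b a" shows "Bf p M u v = Bf p M v u"
  unfolding Bf_def
  apply (subst sum.swap)
  apply (rule sum.cong, simp)+
  using assms by (simp add: algebra_simps)

lemma Bf_add1: "Bf p M (\<lambda>i. u i + v i) w = Bf p M u w + Bf p M v w"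
  unfolding Bf_def by (simp add: algebra_simps sum.distrib)
lemma Bf_add2: "Bf p M w (\<lambda>i. u i + v i) = Bf p M w u + Bf p M w v"
  unfolding Bf_def by (simp add: algebra_simps sum.distrib)
lemma Bf_diff1: "Bf p M (\<lambda>i. u i - v i) w = Bf p M u w - Bf p M v w"
  unfolding Bf_def by (simp add: algebra_simps sum_subtractf)
lemma Bf_diff2: "Bf p M w (\<lambda>i. u i - v i) = Bf p M w u - Bf p M w v"
  unfolding Bf_def by (simp add: algebra_simps sum_subtractf)
lemma Bf_scal1: "Bf p M (\<lambda>i. t * u i) w = t * Bf p M u w"
  unfolding Bf_def by (simp add: algebra_simps sum_distrib_left)
lemma Bf_scal2: "Bf p M w (\<lambda>i. t * u i) = t * Bf p M w u"
  unfolding Bf_def by (simp add: algebra_simps sum_distrib_left)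

lemma Bf_cont: "continuous_on UNIV (\<lambda>x. Bf p M x x)"
  unfolding Bf_def
  by (intro continuous_intros continuous_on_product_coordinates)
lemma Nf_cont: "continuous_on UNIV (\<lambda>x. Nf p x)"
  unfolding Nf_def
  by (intro continuous_intros continuous_on_product_coordinates)

definition Ksph :: "nat \<Rightarrow> (nat \<Rightarrow> real) set" where
  "Ksph p = {x. Nf p x = 1 \<and> (\<forall>i\<ge>p. x i = 0)}"

lemma Ksph_compact: "compact (Ksph p)"
proof -
  define S where "S = (\<lambda>i::nat. if i < p then {-1..1::real} else {0})"
  have c1: "compact (PiE UNIV S)"
  proof -
    have "compactin (product_topology (\<lambda>i. euclidean) UNIV) (PiE UNIV S)"
      unfolding compactin_PiE S_def by auto
    thus ?thesis by (simp add: euclidean_product_topology compactin_euclidean_iff)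
  qed
  have cl: "closed (Ksph p)"
  proof -
    have "Ksph p = {x. Nf p x = 1} \<inter> (\<Inter>i\<in>{p..}. {x. x i = 0})"
      unfolding Ksph_def by auto
    moreover have "closed {x. Nf p x = 1}"
      using closed_Collect_eq[OF Nf_cont continuous_on_const] by simp
    moreover have "closed {x::nat\<Rightarrow>real. x i = 0}" for i
      by (rule closed_Collect_eq[OF continuous_on_product_coordinates continuous_on_const])
    ultimately show ?thesis by (simp add: closed_Int closed_INT)
  qed
  have sub: "Ksph p \<subseteq> PiE UNIV S"
  proof
    fix x assume x: "x \<in> Ksph p"
    have "\<bar>x i\<bar> \<le> 1" if "i < p" for i
    proof -
      have "(x i)\<^sup>2 \<le> Nf p x" unfolding Nf_def
        using that by (intro member_le_sum) auto
      hence "(x i)\<^sup>2 \<le> 1\<^sup>2" using x by (simp add: Ksph_def)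
      thus ?thesis using abs_le_square_iff[of "x i" 1] by simp
    qed
    thus "x \<in> PiE UNIV S" using x unfolding Ksph_def S_def PiE_def by (auto simp: abs_le_iff)
  qed
  have "Ksph p = PiE UNIV S \<inter> Ksph p" using sub by auto
  thus ?thesis using compact_Int_closed[OF c1 cl] by simp
qed

lemma Bf_cong: "(\<And>i. i < p \<Longrightarrow> u i = u' i) \<Longrightarrow> (\<And>i. i < p \<Longrightarrow> v i = v' i) \<Longrightarrow> Bf p M u v = Bf p M u' v'"
  unfolding Bf_def by (intro sum.cong) auto
lemma Nf_cong: "(\<And>i. i < p \<Longrightarrow> u i = u' i) \<Longrightarrow> Nf p u = Nf p u'"
  unfolding Nf_def by (intro sum.cong) auto

lemma Bf_zero: "(\<And>i. i < p \<Longrightarrow> u i = 0) \<Longrightarrow> Bf p M u v = 0"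
  unfolding Bf_def by simp

lemma Nf_scal: "Nf p (\<lambda>i. t * u i) = t\<^sup>2 * Nf p u"
  unfolding Nf_def by (simp add: sum_distrib_left power_mult_distrib)

lemma rayleigh_lower:
  assumes sym: "\<forall>a<p. \<forall>b<p. M a b = M b a"
  and ev: "\<And>x lam. (\<exists>a<p. x a \<noteq> 0) \<Longrightarrow> (\<forall>a<p. Mv p M x a = lam * x a) \<Longrightarrow> lo \<le> lam"
  shows "lo * Nf p x \<le> Bf p M x x"
proof (cases "p = 0")
  case True thus ?thesis by (simp add: Nf_def Bf_def)
next
  case False
  define e0 :: "nat \<Rightarrow> real" where "e0 = (\<lambda>i. if i = 0 then 1 else 0)"
  have "(\<Sum>a<p. (e0 a)\<^sup>2) = (\<Sum>a<p. if a = 0 then 1 else 0)"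
    by (rule sum.cong) (auto simp: e0_def)
  hence "e0 \<in> Ksph p" using False unfolding Ksph_def Nf_def by (auto simp: e0_def)
  hence ne: "Ksph p \<noteq> {}" by auto
  obtain x0 where x0K: "x0 \<in> Ksph p" and x0min: "\<And>y. y \<in> Ksph p \<Longrightarrow> Bf p M x0 x0 \<le> Bf p M y y"
    using continuous_attains_inf[OF Ksph_compact ne continuous_on_subset[OF Bf_cont subset_UNIV]]
    by blast
  define m where "m = Bf p M x0 x0"
  have G: "m * Nf p y \<le> Bf p M y y" for y
  proof (cases "Nf p y = 0")
    case True
    hence "Bf p M y y = 0" using Nf_zero by (intro Bf_zero) auto
    thus ?thesis using True by simp
  next
    case False
    define s where "s = sqrt (Nf p y)"
    have s0: "s > 0" using False Nf_nonneg[of p y] unfolding s_def by simp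
    have ss: "s\<^sup>2 = Nf p y" using Nf_nonneg[of p y] unfolding s_def by simp
    define y' where "y' = (\<lambda>i. if i < p then y i / s else 0)"
    have "Nf p y' = Nf p (\<lambda>i. (1/s) * y i)" by (rule Nf_cong) (simp add: y'_def)
    also have "\<dots> = 1" unfolding Nf_scal using ss s0 False by (simp add: power_divide)
    finally have "y' \<in> Ksph p" unfolding Ksph_def y'_def by auto
    hence "m \<le> Bf p M y' y'" using x0min m_def by auto
    also have "Bf p M y' y' = Bf p M (\<lambda>i. (1/s) * y i) (\<lambda>i. (1/s) * y i)"
      by (rule Bf_cong) (simp_all add: y'_def)
    also have "\<dots> = Bf p M y y / s\<^sup>2" unfolding Bf_scal1 Bf_scal2 by (simp add: power2_eq_square)
    finally have "m * s\<^sup>2 \<le> Bf p M y y" using s0 by (simp add: pos_le_divide_eq)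
    thus ?thesis using ss by simp
  qed
  have Nx0: "Nf p x0 = 1" and x0z: "\<forall>i\<ge>p. x0 i = 0" using x0K unfolding Ksph_def by auto
  define r where "r = (\<lambda>a. Mv p M x0 a - m * x0 a)"
  define g where "g = (\<lambda>y. Bf p M y y - m * Nf p y)"
  have g0: "g y \<ge> 0" for y using G unfolding g_def by simp
  have gx0: "g x0 = 0" unfolding g_def m_def using Nx0 by simp
  have exp: "g (\<lambda>i. x0 i - t * r i) = g x0 - 2 * t * Nf p r + t\<^sup>2 * g r" for t
  proof -
    have B1: "Bf p M (\<lambda>i. x0 i - t * r i) (\<lambda>i. x0 i - t * r i)
       = Bf p M x0 x0 - 2 * t * Bf p M r x0 + t\<^sup>2 * Bf p M r r"
      using Bf_sym[OF sym, of x0 r]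
      by (simp add: Bf_diff1 Bf_diff2 Bf_scal1 Bf_scal2 power2_eq_square algebra_simps)
    have N1: "Nf p (\<lambda>i. x0 i - t * r i) = Nf p x0 - 2 * t * (\<Sum>a<p. r a * x0 a) + t\<^sup>2 * Nf p r"
      unfolding Nf_def by (simp add: power2_eq_square algebra_simps sum.distrib sum_subtractf sum_distrib_left)
    have R: "Bf p M r x0 - m * (\<Sum>a<p. r a * x0 a) = Nf p r"
      unfolding Bf_Mv Nf_def r_def
      by (simp add: sum_distrib_left sum_subtractf[symmetric] power2_eq_square algebra_simps)
    show ?thesis unfolding g_def B1 N1 using R
      by (simp add: algebra_simps)
  qed
  have Nr: "Nf p r = 0"
  proof (rule ccontr)
    assume "Nf p r \<noteq> 0"
    hence pos: "Nf p r > 0" using Nf_nonneg[of p r] by simp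
    define t where "t = Nf p r / (g r + 1)"
    have t0: "t > 0" using pos g0[of r] unfolding t_def by simp
    have "0 \<le> g (\<lambda>i. x0 i - t * r i)" by (rule g0)
    hence "0 \<le> - 2 * t * Nf p r + t\<^sup>2 * g r" using exp gx0 by simp
    hence "2 * Nf p r \<le> t * g r" using t0 by (simp add: power2_eq_square algebra_simps)
    also have "t * g r < Nf p r" unfolding t_def using pos g0[of r]
      by (simp add: field_simps)
    finally show False using pos by simp
  qed
  have eig: "\<forall>a<p. Mv p M x0 a = m * x0 a"
    using Nf_zero[OF Nr] unfolding r_def by auto
  have "\<exists>a<p. x0 a \<noteq> 0"
  proof (rule ccontr)
    assume "\<not> ?thesis"
    hence "Nf p x0 = 0" unfolding Nf_def by simp
    thus False using Nx0 by simp
  qed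
  hence "lo \<le> m" using ev eig by blast
  hence "lo * Nf p x \<le> m * Nf p x" using Nf_nonneg by (simp add: mult_right_mono)
  also have "\<dots> \<le> Bf p M x x" by (rule G)
  finally show ?thesis .
qed


lemma rayleigh_upper:
  assumes sym: "\<forall>a<p. \<forall>b<p. M a b = M b a"
  and ev: "\<And>x lam. (\<exists>a<p. x a \<noteq> 0) \<Longrightarrow> (\<forall>a<p. Mv p M x a = lam * x a) \<Longrightarrow> lam \<le> hi"
  shows "Bf p M x x \<le> hi * Nf p x"
proof -
  have "- hi * Nf p x \<le> Bf p (\<lambda>a b. - M a b) x x"
  proof (rule rayleigh_lower)
    show "\<forall>a<p. \<forall>b<p. - M a b = - M b a" using sym by auto
    fix y lam assume nz: "\<exists>a<p. y a \<noteq> 0" and e: "\<forall>a<p. Mv p (\<lambda>a b. - M a b) y a = lam * y a"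
    have "\<forall>a<p. Mv p M y a = (- lam) * y a"
    proof (intro allI impI)
      fix a assume "a < p"
      hence "Mv p (\<lambda>a b. - M a b) y a = lam * y a" using e by auto
      thus "Mv p M y a = (- lam) * y a" unfolding Mv_def by (simp add: sum_negf)
    qed
    hence "- lam \<le> hi" using ev nz by blast
    thus "- hi \<le> lam" by simp
  qed
  also have "Bf p (\<lambda>a b. - M a b) x x = - Bf p M x x" unfolding Bf_def by (simp add: sum_negf)
  finally show ?thesis by simp
qed

lemma Bf_CS:
  assumes sym: "\<forall>a<p. \<forall>b<p. M a b = M b a" and psd: "\<And>y. 0 \<le> Bf p M y y"
  shows "(Bf p M u v)\<^sup>2 \<le> Bf p M u u * Bf p M v v"
proof -
  let ?B = "Bf p M u v"
  have ex: "0 \<le> Bf p M u u - 2 * t * ?B + t\<^sup>2 * Bf p M v v" for t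
  proof -
    have "0 \<le> Bf p M (\<lambda>i. u i - t * v i) (\<lambda>i. u i - t * v i)" by (rule psd)
    also have "\<dots> = Bf p M u u - 2 * t * ?B + t\<^sup>2 * Bf p M v v"
      using Bf_sym[OF sym, of u v]
      by (simp add: Bf_diff1 Bf_diff2 Bf_scal1 Bf_scal2 power2_eq_square algebra_simps)
    finally show ?thesis .
  qed
  show ?thesis
  proof (cases "Bf p M v v = 0")
    case True
    have "?B = 0"
    proof (rule ccontr)
      assume B: "?B \<noteq> 0"
      have "0 \<le> Bf p M u u - 2 * ((Bf p M u u + 1) / (2 * ?B)) * ?B"
        using ex[of "(Bf p M u u + 1) / (2 * ?B)"] True by simp
      thus False using B by (simp add: field_simps)
    qed
    thus ?thesis using True by simp
  next
    case False
    hence pos: "Bf p M v v > 0" using psd[of v] by simp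
    have "0 \<le> Bf p M u u - 2 * (?B / Bf p M v v) * ?B + (?B / Bf p M v v)\<^sup>2 * Bf p M v v"
      by (rule ex)
    also have "\<dots> = Bf p M u u - ?B\<^sup>2 / Bf p M v v"
      using pos by (simp add: field_simps power2_eq_square)
    finally show ?thesis using pos by (simp add: field_simps)
  qed
qed

lemma NMv_bound:
  assumes sym: "\<forall>a<p. \<forall>b<p. M a b = M b a" and psd: "\<And>y. 0 \<le> Bf p M y y"
    and up: "\<And>y. Bf p M y y \<le> hi * Nf p y" and hi: "0 \<le> hi"
  shows "Nf p (Mv p M y) \<le> hi * Bf p M y y"
proof -
  let ?w = "Mv p M y"
  have e: "Bf p M ?w y = Nf p ?w" unfolding Bf_Mv Nf_def by (simp add: power2_eq_square)
  have "(Nf p ?w)\<^sup>2 \<le> Bf p M ?w ?w * Bf p M y y" using Bf_CS[OF sym psd, of ?w y] e by simp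
  also have "\<dots> \<le> hi * Nf p ?w * Bf p M y y" using up[of ?w] psd[of y] by (simp add: mult_right_mono)
  finally have *: "Nf p ?w * Nf p ?w \<le> Nf p ?w * (hi * Bf p M y y)" by (simp add: power2_eq_square algebra_simps)
  show ?thesis
  proof (cases "Nf p ?w = 0")
    case True
    have "0 \<le> hi * Bf p M y y" using hi psd[of y] by simp
    thus ?thesis using True by simp
  next
    case False
    hence "Nf p ?w > 0" using Nf_nonneg[of p ?w] by simp
    thus ?thesis using * by simp
  qed
qed


lemma ifm1: "(if P then (1::real) else 0) * x = (if P then x else 0)" by simp
lemma ifm2: "x * (if P then (1::real) else 0) = (if P then x else 0)" by simp

lemma level_bounds:
  fixes A S :: "nat \<Rightarrow> nat \<Rightarrow> real"
  assumes sym: "\<forall>a<p. \<forall>b<p. A a b = A b a"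
  and lo: "0 < lo" and lohi: "lo \<le> hi"
  and ev: "\<forall>x lam. (\<exists>a<p. x a \<noteq> 0) \<and> (\<forall>a<p. Mv p A x a = lam * x a) \<longrightarrow> lo \<le> lam \<and> lam \<le> hi"
  and SA: "\<forall>a<p. \<forall>b<p. (\<Sum>c<p. S a c * A c b) = (if a = b then 1 else 0)"
  shows "Nf p x \<le> hi * Bf p S x x" "lo * Bf p S x x \<le> Nf p x" "Bf p S u v = Bf p S v u"
    and "j < p \<Longrightarrow> lo \<le> A j j" "j < p \<Longrightarrow> (\<Sum>a<p. (A a j)\<^sup>2) \<le> hi\<^sup>2"
proof -
  have QL: "lo * Nf p y \<le> Bf p A y y" for y
    by (rule rayleigh_lower[OF sym]) (use ev in blast)
  have QU: "Bf p A y y \<le> hi * Nf p y" for y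
    by (rule rayleigh_upper[OF sym]) (use ev in blast)
  have psd: "0 \<le> Bf p A y y" for y
    using QL[of y] lo Nf_nonneg[of p y] by (meson mult_nonneg_nonneg less_imp_le order_trans)
  have hi0: "0 \<le> hi" using lo lohi by simp
  define yx where "yx = (\<lambda>u b. \<Sum>a<p. u a * S a b)"
  have K0: "Mv p A (yx v) b = v b" if b: "b < p" for v b
  proof -
    have "Mv p A (yx v) b = (\<Sum>c<p. \<Sum>a<p. A b c * (v a * S a c))"
      unfolding Mv_def yx_def by (simp add: sum_distrib_left)
    also have "\<dots> = (\<Sum>a<p. v a * (\<Sum>c<p. S a c * A c b))"
      apply (subst sum.swap)
      apply (rule sum.cong, simp)
      apply (simp add: sum_distrib_left)
      apply (rule sum.cong, simp)
      using sym b by (simp add: algebra_simps)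
    also have "\<dots> = (\<Sum>a<p. v a * (if a = b then 1 else 0))"
      by (rule sum.cong) (use SA b in auto)
    also have "\<dots> = v b" using b by (simp add: if_distrib cong: if_cong)
    finally show ?thesis .
  qed
  have K1: "Bf p S u v = Bf p A (yx u) (yx v)" for u v
  proof -
    have "Bf p S u v = (\<Sum>b<p. yx u b * v b)"
      unfolding Bf_def yx_def
      apply (subst sum.swap)
      by (simp add: sum_distrib_right)
    also have "\<dots> = Bf p A (yx u) (yx v)"
      unfolding Bf_Mv by (rule sum.cong) (simp_all add: K0)
    finally show ?thesis .
  qed
  show "Bf p S u v = Bf p S v u" unfolding K1 by (rule Bf_sym[OF sym])
  show "Nf p x \<le> hi * Bf p S x x"
  proof -
    have "Nf p x = Nf p (Mv p A (yx x))" by (rule Nf_cong) (simp add: K0)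
    also have "\<dots> \<le> hi * Bf p A (yx x) (yx x)" by (rule NMv_bound[OF sym psd QU hi0])
    finally show ?thesis unfolding K1 .
  qed
  show "lo * Bf p S x x \<le> Nf p x"
  proof -
    let ?y = "yx x"
    have e: "Bf p A ?y ?y = (\<Sum>a<p. ?y a * x a)" unfolding Bf_Mv by (rule sum.cong) (simp_all add: K0)
    have pw: "?y a * x a \<le> lo / 2 * (?y a)\<^sup>2 + (x a)\<^sup>2 / (2 * lo)" for a
    proof -
      have "0 \<le> (lo * ?y a - x a)\<^sup>2" by simp
      hence "2 * lo * (?y a * x a) \<le> lo\<^sup>2 * (?y a)\<^sup>2 + (x a)\<^sup>2"
        by (simp add: power2_eq_square algebra_simps)
      thus ?thesis using lo by (simp add: field_simps power2_eq_square)
    qed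
    have "Bf p A ?y ?y \<le> (\<Sum>a<p. lo / 2 * (?y a)\<^sup>2 + (x a)\<^sup>2 / (2 * lo))"
      unfolding e by (rule sum_mono) (rule pw)
    also have "\<dots> = lo / 2 * Nf p ?y + Nf p x / (2 * lo)"
      unfolding Nf_def by (simp add: sum.distrib sum_distrib_left sum_divide_distrib)
    finally have "Bf p A ?y ?y \<le> lo / 2 * Nf p ?y + Nf p x / (2 * lo)" .
    moreover have "lo / 2 * Nf p ?y \<le> Bf p A ?y ?y / 2" using QL[of ?y] by simp
    ultimately have h1: "lo * (2 * Bf p A ?y ?y) \<le> Nf p x + lo * (lo * Nf p ?y)" using lo by (simp add: field_simps)
    have "lo * (lo * Nf p ?y) \<le> lo * Bf p A ?y ?y" using QL[of ?y] lo by (simp add: mult_left_mono)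
    hence "lo * Bf p A ?y ?y \<le> Nf p x" using h1 by linarith
    hence "Bf p A ?y ?y \<le> Nf p x / lo" using lo by (simp add: field_simps)
    thus ?thesis unfolding K1 using lo by (simp add: field_simps)
  qed
  define e where "e = (\<lambda>i::nat. if i = j then (1::real) else 0)"
  assume j: "j < p"
  have Be: "Bf p A e e = A j j"
    unfolding Bf_def e_def using j by (simp add: ifm1 ifm2)
  have Ne: "Nf p e = 1" unfolding Nf_def e_def using j by (simp add: ifm1 ifm2 power2_eq_square)
  show "lo \<le> A j j" using QL[of e] Be Ne by simp
  have "Mv p A e a = A a j" for a unfolding Mv_def e_def using j by (simp add: ifm1 ifm2)
  hence "(\<Sum>a<p. (A a j)\<^sup>2) = Nf p (Mv p A e)" unfolding Nf_def by simp
  also have "\<dots> \<le> hi * Bf p A e e" by (rule NMv_bound[OF sym psd QU hi0])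
  also have "\<dots> \<le> hi * hi" using QU[of e] Ne hi0 by (simp add: mult_left_mono)
  finally show "(\<Sum>a<p. (A a j)\<^sup>2) \<le> hi\<^sup>2" by (simp add: power2_eq_square)
qed


lemma core:
  fixes K L :: "nat set" and w :: "nat \<Rightarrow> real" and S :: "nat \<Rightarrow> nat \<Rightarrow> nat \<Rightarrow> real"
    and e :: "nat \<Rightarrow> nat \<Rightarrow> real" and d :: "nat \<Rightarrow> real"
  assumes fin: "finite K" and LK: "L \<subseteq> K" and w0: "\<forall>k\<in>K. 0 \<le> w k"
    and Wpos: "0 < (\<Sum>k\<in>L. w k)"
    and sym: "\<forall>k\<in>K. \<forall>u v. Bf p (S k) u v = Bf p (S k) v u"
    and a: "0 < a" and lowa: "\<forall>k\<in>L. \<forall>x. a * Nf p x \<le> Bf p (S k) x x"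
    and psd: "\<forall>k\<in>K. \<forall>x. 0 \<le> Bf p (S k) x x"
    and b: "0 < b" and upb: "\<forall>k\<in>K. \<forall>x. Bf p (S k) x x \<le> b * Nf p x"
    and ez: "\<forall>k\<in>L. \<forall>i<p. e k i = 0"
    and eE: "\<forall>k\<in>K - L. Nf p (e k) \<le> E"
    and opt: "(\<Sum>k\<in>K. w k * Bf p (S k) (\<lambda>i. e k i - d i) (\<lambda>i. e k i - d i))
              \<le> (\<Sum>k\<in>K. w k * Bf p (S k) (e k) (e k))"
  shows "Nf p d \<le> 4 * b\<^sup>2 * E * (\<Sum>k\<in>K - L. w k)\<^sup>2 / ((\<Sum>k\<in>L. w k) * a)\<^sup>2"
proof -
  define W where "W = (\<Sum>k\<in>L. w k)"
  define R where "R = (\<Sum>k\<in>K - L. w k)"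
  define X where "X = Nf p d"
  have X0: "0 \<le> X" unfolding X_def by (rule Nf_nonneg)
  have R0: "0 \<le> R" unfolding R_def using w0 by (intro sum_nonneg) auto
  have finL: "finite L" using fin LK finite_subset by auto
  have exp: "Bf p (S k) (\<lambda>i. e k i - d i) (\<lambda>i. e k i - d i)
     = Bf p (S k) (e k) (e k) - 2 * Bf p (S k) (e k) d + Bf p (S k) d d" if "k \<in> K" for k
    using sym that by (simp add: Bf_diff1 Bf_diff2 algebra_simps)
  have s1: "(\<Sum>k\<in>K. w k * Bf p (S k) d d) \<le> (\<Sum>k\<in>K. w k * (2 * Bf p (S k) (e k) d))"
  proof -
    have "(\<Sum>k\<in>K. w k * Bf p (S k) (\<lambda>i. e k i - d i) (\<lambda>i. e k i - d i))
      = (\<Sum>k\<in>K. w k * Bf p (S k) (e k) (e k)) - (\<Sum>k\<in>K. w k * (2 * Bf p (S k) (e k) d))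
        + (\<Sum>k\<in>K. w k * Bf p (S k) d d)"
      by (simp add: exp algebra_simps sum.distrib sum_subtractf)
    thus ?thesis using opt by linarith
  qed
  have sK: "(\<Sum>k\<in>K. f k) = (\<Sum>k\<in>L. f k) + (\<Sum>k\<in>K - L. f k)" for f :: "nat \<Rightarrow> real"
    using sum.subset_diff[OF LK fin, of f] by simp
  have s2: "W * a * X \<le> (\<Sum>k\<in>K. w k * Bf p (S k) d d)"
  proof -
    have "W * a * X = (\<Sum>k\<in>L. w k * (a * X))" unfolding W_def by (simp add: sum_distrib_left sum_distrib_right mult.commute mult.left_commute)
    also have "\<dots> \<le> (\<Sum>k\<in>L. w k * Bf p (S k) d d)"
      using lowa w0 LK unfolding X_def by (intro sum_mono mult_left_mono) auto
    also have "\<dots> \<le> (\<Sum>k\<in>K. w k * Bf p (S k) d d)"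
      unfolding sK[of "\<lambda>k. w k * Bf p (S k) d d"]
      using w0 psd by (simp, intro sum_nonneg mult_nonneg_nonneg) auto
    finally show ?thesis .
  qed
  have s3: "(\<Sum>k\<in>K. w k * (2 * Bf p (S k) (e k) d)) = (\<Sum>k\<in>K - L. w k * (2 * Bf p (S k) (e k) d))"
  proof -
    have "(\<Sum>k\<in>L. w k * (2 * Bf p (S k) (e k) d)) = 0"
      using ez by (intro sum.neutral) (auto intro: Bf_zero)
    thus ?thesis unfolding sK[of "\<lambda>k. w k * (2 * Bf p (S k) (e k) d)"] by simp
  qed
  have tb: "2 * Bf p (S k) (e k) d \<le> t * (b * E) + b * X / t" if k: "k \<in> K - L" and t: "t > 0" for k t
  proof -
    have "0 \<le> Bf p (S k) (\<lambda>i. t * e k i - d i) (\<lambda>i. t * e k i - d i)" using psd k by auto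
    also have "\<dots> = t\<^sup>2 * Bf p (S k) (e k) (e k) - 2 * t * Bf p (S k) (e k) d + Bf p (S k) d d"
      using sym k by (simp add: Bf_diff1 Bf_diff2 Bf_scal1 Bf_scal2 power2_eq_square algebra_simps)
    finally have "2 * t * Bf p (S k) (e k) d \<le> t\<^sup>2 * Bf p (S k) (e k) (e k) + Bf p (S k) d d" by simp
    also have "\<dots> \<le> t\<^sup>2 * (b * E) + b * X"
    proof -
      have "Bf p (S k) (e k) (e k) \<le> b * E" using upb eE k b
        by (meson DiffD1 mult_left_mono order_trans less_imp_le)
      hence "t\<^sup>2 * Bf p (S k) (e k) (e k) \<le> t\<^sup>2 * (b * E)" by (simp add: mult_left_mono)
      moreover have "Bf p (S k) d d \<le> b * X" using upb k unfolding X_def by auto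
      ultimately show ?thesis by linarith
    qed
    finally have h: "2 * t * Bf p (S k) (e k) d \<le> t\<^sup>2 * (b * E) + b * X" .
    have eq: "t * (t * (b * E) + b * X / t) = t\<^sup>2 * (b * E) + b * X"
      using t by (simp add: field_simps power2_eq_square)
    have "t * (2 * Bf p (S k) (e k) d) \<le> t * (t * (b * E) + b * X / t)"
      unfolding eq using h by (simp add: mult.assoc)
    thus ?thesis using t by simp
  qed
  have main: "W * a * X \<le> R * (t * (b * E) + b * X / t)" if t: "t > 0" for t
  proof -
    have "W * a * X \<le> (\<Sum>k\<in>K - L. w k * (2 * Bf p (S k) (e k) d))" using s1 s2 s3 by linarith
    also have "\<dots> \<le> (\<Sum>k\<in>K - L. w k * (t * (b * E) + b * X / t))"
      using w0 tb t by (intro sum_mono mult_left_mono) auto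
    also have "\<dots> = R * (t * (b * E) + b * X / t)" unfolding R_def by (simp add: sum_distrib_right)
    finally show ?thesis .
  qed
  have Wp: "W > 0" using Wpos W_def by simp
  show ?thesis
  proof (cases "R = 0")
    case True
    have "W * a * X \<le> 0" using main[of 1] True by simp
    hence "X \<le> 0" using Wp a by (simp add: mult_le_0_iff)
    thus ?thesis using True unfolding R_def[symmetric] W_def[symmetric] X_def by simp
  next
    case False
    hence Rp: "R > 0" using R0 by simp
    define t where "t = 2 * b * R / (W * a)"
    have tp: "t > 0" unfolding t_def using Rp b Wp a by simp
    have "W * a * X \<le> R * (t * (b * E) + b * X / t)" by (rule main[OF tp])
    also have "\<dots> = 2 * b\<^sup>2 * R\<^sup>2 * E / (W * a) + W * a * X / 2"
      unfolding t_def using Rp b Wp a by (simp add: field_simps power2_eq_square)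
    finally have "W * a * X / 2 \<le> 2 * b\<^sup>2 * R\<^sup>2 * E / (W * a)" by simp
    hence "X \<le> 4 * b\<^sup>2 * R\<^sup>2 * E / (W * a)\<^sup>2"
      using Wp a by (simp add: field_simps power2_eq_square)
    thus ?thesis unfolding R_def W_def X_def by (simp add: algebra_simps)
  qed
qed


lemma ev_fun:
  fixes A :: "real mat"
  assumes A: "A \<in> carrier_mat p p" and ev: "\<forall>ev. eigenvalue A ev \<longrightarrow> lo \<le> ev \<and> ev \<le> hi"
    and nz: "\<exists>a<p. x a \<noteq> 0" and e: "\<forall>a<p. Mv p (\<lambda>a b. A $$ (a, b)) x a = lam * x a"
  shows "lo \<le> lam \<and> lam \<le> hi"
proof -
  have "eigenvalue A lam" unfolding eigenvalue_def eigenvector_def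
  proof (intro exI conjI)
    show "vec p x \<in> carrier_vec (dim_row A)" using A by simp
    show "vec p x \<noteq> 0\<^sub>v (dim_row A)"
    proof
      assume "vec p x = 0\<^sub>v (dim_row A)"
      hence "\<forall>a<p. x a = 0" using A by (metis carrier_matD(1) index_vec index_zero_vec(1))
      thus False using nz by auto
    qed
    show "A *\<^sub>v vec p x = lam \<cdot>\<^sub>v vec p x"
    proof (rule eq_vecI)
      fix i assume "i < dim_vec (lam \<cdot>\<^sub>v vec p x)"
      hence i: "i < p" by simp
      have "(A *\<^sub>v vec p x) $ i = (\<Sum>b<p. A $$ (i, b) * x b)"
        using A i by (simp add: scalar_prod_def lessThan_atLeast0)
      also have "\<dots> = lam * x i" using e i unfolding Mv_def by auto
      finally show "(A *\<^sub>v vec p x) $ i = (lam \<cdot>\<^sub>v vec p x) $ i" using i by simp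
    qed (use A in simp)
  qed
  thus ?thesis using ev by blast
qed

lemma SA_fun:
  fixes A S :: "real mat"
  assumes A: "A \<in> carrier_mat p p" and S: "S \<in> carrier_mat p p" and SA: "S * A = 1\<^sub>m p"
  shows "\<forall>a<p. \<forall>b<p. (\<Sum>c<p. S $$ (a, c) * A $$ (c, b)) = (if a = b then 1 else 0)"
proof (intro allI impI)
  fix a b assume a: "a < p" and b: "b < p"
  have "(S * A) $$ (a, b) = (\<Sum>c<p. S $$ (a, c) * A $$ (c, b))"
    using A S a b by (simp add: scalar_prod_def lessThan_atLeast0)
  thus "(\<Sum>c<p. S $$ (a, c) * A $$ (c, b)) = (if a = b then 1 else 0)" using SA a b by simp
qed

lemma sym_fun:
  fixes A :: "real mat"
  assumes A: "A \<in> carrier_mat p p" and T: "A = transpose_mat A"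
  shows "\<forall>a<p. \<forall>b<p. A $$ (a, b) = A $$ (b, a)"
proof (intro allI impI)
  fix a b assume a: "a < p" and b: "b < p"
  have "A $$ (a, b) = transpose_mat A $$ (a, b)" using T by simp
  also have "\<dots> = A $$ (b, a)" using A a b by simp
  finally show "A $$ (a, b) = A $$ (b, a)" .
qed

lemma sumJ: fixes p :: nat shows "h j = 0 \<Longrightarrow> j < p \<Longrightarrow> (\<Sum>a\<in>{i. i < p \<and> i \<noteq> j}. h a) = (\<Sum>a<p. h a)"
  by (rule sum.mono_neutral_left) auto

lemma quad_Bf: "f j = 0 \<Longrightarrow> j < p \<Longrightarrow> quad_mj p j M f = Bf p (\<lambda>a b. M $$ (a, b)) f f"
  unfolding quad_mj_def Bf_def
  by (subst sumJ, simp_all add: sumJ)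

lemma sqnorm_Nf: "f j = 0 \<Longrightarrow> j < p \<Longrightarrow> sqnorm p j f = Nf p f"
  unfolding sqnorm_def Nf_def by (rule sumJ) auto

lemma beta_norm:
  assumes "j < p" and pos: "lo \<le> Om $$ (j, j)" and lo: "0 < lo" and hb: "(\<Sum>a<p. (Om $$ (a, j))\<^sup>2) \<le> hi\<^sup>2"
  shows "Nf p (beta_star p j Om) \<le> hi\<^sup>2 / lo\<^sup>2"
proof -
  have "Nf p (beta_star p j Om) \<le> (\<Sum>a<p. (Om $$ (a, j))\<^sup>2 / (Om $$ (j, j))\<^sup>2)"
    unfolding Nf_def beta_star_def by (rule sum_mono) (simp add: power_divide)
  also have "\<dots> = (\<Sum>a<p. (Om $$ (a, j))\<^sup>2) / (Om $$ (j, j))\<^sup>2" by (simp add: sum_divide_distrib)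
  also have "\<dots> \<le> hi\<^sup>2 / (Om $$ (j, j))\<^sup>2" using hb by (simp add: divide_right_mono)
  also have "\<dots> \<le> hi\<^sup>2 / lo\<^sup>2" using pos lo
    by (intro divide_left_mono) (auto intro: power_mono)
  finally show ?thesis .
qed

lemma Nf_diff: "Nf p (\<lambda>i. u i - v i) \<le> 2 * Nf p u + 2 * Nf p v"
proof -
  have "(u i - v i)\<^sup>2 \<le> 2 * (u i)\<^sup>2 + 2 * (v i)\<^sup>2" for i
    using sum_squares_ge_zero[of "u i + v i" 0] by (simp add: power2_eq_square algebra_simps)
  hence "Nf p (\<lambda>i. u i - v i) \<le> (\<Sum>a<p. 2 * (u a)\<^sup>2 + 2 * (v a)\<^sup>2)"
    unfolding Nf_def by (intro sum_mono) auto
  thus ?thesis unfolding Nf_def by (simp add: sum.distrib sum_distrib_left)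
qed

theorem lemma2:
  fixes lmin lmax delta0 ctau C0 :: real
  assumes "0 < lmin" and "lmin \<le> lmax" and "0 < delta0" and "0 < ctau" and "ctau < 1"
    and "1 \<le> C0"
  shows "\<exists>c>0. \<forall>(n::nat) (p::nat) (z::nat \<Rightarrow> real) (Om::real \<Rightarrow> real mat) (Sig::real \<Rightarrow> real mat)
      (s::nat \<Rightarrow> nat) (cw::nat \<Rightarrow> real) (tau::real).
    (\<forall>i<n. Om (z i) \<in> carrier_mat p p \<and> Om (z i) = transpose_mat (Om (z i))
        \<and> (\<forall>ev. eigenvalue (Om (z i)) ev \<longrightarrow> lmin \<le> ev \<and> ev \<le> lmax)
        \<and> Sig (z i) \<in> carrier_mat p p \<and> Sig (z i) * Om (z i) = 1\<^sub>m p
        \<and> (\<forall>j<p. l0 p j (beta_star p j (Om (z i))) \<le> s j))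
    \<and> (\<forall>l<n. nlev n z l < n \<longrightarrow> delta0 \<le> delta n z l)
    \<and> (\<forall>l<n. 0 < cw l)
    \<and> tau = ctau * Min {delta n z l | l. l < n \<and> nlev n z l < n} / sqrt (ln (real n))
    \<longrightarrow> (\<forall>j<p. \<forall>l<n. nlev n z l < n \<longrightarrow>
          (\<forall>bt. in_Rpm1 p j bt \<and> real (l0 p j bt) \<le> C0 * real (s j)
             \<and> (\<forall>b. in_Rpm1 p j b \<and> real (l0 p j b) \<le> C0 * real (s j) \<longrightarrow>
                   obj n p z Om Sig cw tau j l bt \<le> obj n p z Om Sig cw tau j l b)
           \<longrightarrow> sqnorm p j (\<lambda>i. bt i - beta_star p j (Om (z l)) i)
               \<le> c * exp (- 2 * (delta n z l)\<^sup>2 / tau\<^sup>2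
                          + 2 * ln (real n / real (nlev n z l) - 1)) * real (s j)))"
proof -
  define a where "a = 1 / lmax"
  define b where "b = 1 / lmin"
  define E where "E = 4 * lmax\<^sup>2 / lmin\<^sup>2"
  define c where "c = 4 * b\<^sup>2 * E / a\<^sup>2"
  have lmax0: "0 < lmax" using assms by simp
  have a0: "0 < a" unfolding a_def using lmax0 by simp
  have b0: "0 < b" unfolding b_def using assms by simp
  have E0: "0 \<le> E" unfolding E_def by simp
  have c0: "0 < c" unfolding c_def E_def using a0 b0 assms by simp
  show ?thesis
  proof (intro exI[of _ c] conjI allI impI c0)
    fix n p z Om Sig s cw tau j l bt
    assume H: "(\<forall>i<n. Om (z i) \<in> carrier_mat p p \<and> Om (z i) = transpose_mat (Om (z i))
        \<and> (\<forall>ev. eigenvalue (Om (z i)) ev \<longrightarrow> lmin \<le> ev \<and> ev \<le> lmax)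
        \<and> Sig (z i) \<in> carrier_mat p p \<and> Sig (z i) * Om (z i) = 1\<^sub>m p
        \<and> (\<forall>j<p. l0 p j (beta_star p j (Om (z i))) \<le> s j))
    \<and> (\<forall>l<n. nlev n z l < n \<longrightarrow> delta0 \<le> delta n z l)
    \<and> (\<forall>l<n. 0 < cw l)
    \<and> tau = ctau * Min {delta n z l | l. l < n \<and> nlev n z l < n} / sqrt (ln (real n))"
    and j: "j < p" and l: "l < n" and nl: "nlev n z l < n"
    and bt: "in_Rpm1 p j bt \<and> real (l0 p j bt) \<le> C0 * real (s j)
             \<and> (\<forall>b. in_Rpm1 p j b \<and> real (l0 p j b) \<le> C0 * real (s j) \<longrightarrow>
                   obj n p z Om Sig cw tau j l bt \<le> obj n p z Om Sig cw tau j l b)"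
    define beta where "beta = (\<lambda>k. beta_star p j (Om (z k)))"
    define K where "K = {..<n}"
    define L where "L = {k. k < n \<and> z k = z l}"
    define w where "w = (\<lambda>k. wgt cw z tau l k)"
    define e where "e = (\<lambda>k i. beta k i - beta l i)"
    define d where "d = (\<lambda>i. bt i - beta l i)"
    define Sf where "Sf = (\<lambda>k a b. Sig (z k) $$ (a, b))"
    define dl where "dl = delta n z l"
    define nL where "nL = nlev n z l"
    have LK: "L \<subseteq> K" unfolding L_def K_def by auto
    have lL: "l \<in> L" unfolding L_def using l by simp
    have finK: "finite K" unfolding K_def by simp
    have finL: "finite L" using finK LK finite_subset by blast
    have cardL: "card L = nL" unfolding L_def nL_def nlev_def by simp
    have nL1: "1 \<le> nL" using lL finL cardL by (metis One_nat_def Suc_leI card_gt_0_iff empty_iff)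
    have nLn: "nL < n" using nl nL_def by simp
    have cardKL: "card (K - L) = n - nL" using card_Diff_subset[OF finL LK] cardL unfolding K_def by simp
    have bj0: "beta k j = 0" for k unfolding beta_def beta_star_def by simp
    have btj: "bt j = 0" and btp: "\<forall>i\<ge>p. bt i = 0" using bt unfolding in_Rpm1_def by auto
    have n2: "1 < n" using nL1 nLn by simp
    define D where "D = {delta n z l | l. l < n \<and> nlev n z l < n}"
    have finD: "finite D" unfolding D_def by simp
    have dlD: "dl \<in> D" unfolding D_def dl_def using l nl by blast
    have Dge: "\<forall>x\<in>D. delta0 \<le> x" unfolding D_def using H by auto
    have "delta0 \<le> Min D" using finD dlD Dge by (subst Min_ge_iff) auto
    hence MinD: "0 < Min D" using assms by simp
    have "0 < ln (real n)" using n2 by simp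
    hence tau0: "0 < tau" using H MinD assms unfolding D_def by simp
    have dl0: "delta0 \<le> dl" using H l nl dl_def by simp
    hence dlpos: "0 < dl" using assms by simp
    define w0 where "w0 = cw l / tau"
    have cwl: "0 < cw l" using H l by simp
    have w0p: "0 < w0" unfolding w0_def using cwl tau0 by simp
    define eps where "eps = exp (- (dl\<^sup>2 / tau\<^sup>2))"
    have wnn: "\<forall>k\<in>K. 0 \<le> w k" unfolding w_def wgt_def using cwl tau0 by auto
    have wL: "w k = w0" if "k \<in> L" for k using that unfolding w_def wgt_def w0_def L_def by simp
    have wKL: "w k \<le> w0 * eps" if "k \<in> K - L" for k
    proof -
      have k: "k < n" "z k \<noteq> z l" using that unfolding K_def L_def by auto
      have "dl \<le> \<bar>z k - z l\<bar>" unfolding dl_def delta_def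
        by (rule Min_le) (use k in auto)
      hence "dl\<^sup>2 \<le> (z k - z l)\<^sup>2" using dlpos
        by (metis abs_of_pos abs_le_square_iff power2_abs)
      hence "dl\<^sup>2 / tau\<^sup>2 \<le> ((z k - z l) / tau)\<^sup>2" using tau0 by (simp add: power_divide divide_right_mono)
      hence "exp (- (((z k - z l) / tau)\<^sup>2)) \<le> eps" unfolding eps_def by simp
      thus ?thesis unfolding w_def wgt_def w0_def using cwl tau0
        by (simp add: divide_right_mono mult_left_mono less_imp_le times_divide_eq_right[symmetric] del: times_divide_eq_right)
    qed
    have WL: "(\<Sum>k\<in>L. w k) = nL * w0" using wL cardL by simp
    have RKL: "(\<Sum>k\<in>K - L. w k) \<le> (n - nL) * (w0 * eps)"
      using sum_mono[of "K - L" w "\<lambda>_. w0 * eps"] wKL cardKL by simp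
    have R0: "0 \<le> (\<Sum>k\<in>K - L. w k)" using wnn by (intro sum_nonneg) auto
    have LB: "Nf p x \<le> lmax * Bf p (Sf k) x x \<and> lmin * Bf p (Sf k) x x \<le> Nf p x
        \<and> Bf p (Sf k) u v = Bf p (Sf k) v u \<and> Nf p (beta k) \<le> lmax\<^sup>2 / lmin\<^sup>2"
      if k: "k < n" for k x u v
    proof -
      let ?A = "\<lambda>a b. Om (z k) $$ (a, b)"
      have Hk: "Om (z k) \<in> carrier_mat p p" "Om (z k) = transpose_mat (Om (z k))"
        "\<forall>ev. eigenvalue (Om (z k)) ev \<longrightarrow> lmin \<le> ev \<and> ev \<le> lmax"
        "Sig (z k) \<in> carrier_mat p p" "Sig (z k) * Om (z k) = 1\<^sub>m p" using H k by auto
      have sy: "\<forall>a<p. \<forall>b<p. ?A a b = ?A b a" by (rule sym_fun[OF Hk(1,2)])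
      have evf: "\<forall>x lam. (\<exists>a<p. x a \<noteq> 0) \<and> (\<forall>a<p. Mv p ?A x a = lam * x a) \<longrightarrow> lmin \<le> lam \<and> lam \<le> lmax"
        using ev_fun[OF Hk(1,3)] by blast
      have saf: "\<forall>a<p. \<forall>b<p. (\<Sum>c<p. Sf k a c * ?A c b) = (if a = b then 1 else 0)"
        unfolding Sf_def by (rule SA_fun[OF Hk(1,4,5)])
      note lb = level_bounds[OF sy assms(1) assms(2) evf saf]
      have "Nf p (beta k) \<le> lmax\<^sup>2 / lmin\<^sup>2"
        unfolding beta_def by (rule beta_norm[OF j lb(4)[OF j] assms(1) lb(5)[OF j]])
      thus ?thesis using lb(1,2,3) by blast
    qed
    have finJ: "finite {i. i < p \<and> i \<noteq> j \<and> f i \<noteq> 0}" for f :: "nat \<Rightarrow> real"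
      by (rule finite_subset[of _ "{..<p}"]) auto
    have l0z: "\<And>i. i < p \<Longrightarrow> i \<noteq> j \<Longrightarrow> f i = 0" if "l0 p j f = 0" for f
      using that finJ[of f] unfolding l0_def by auto
    have betal: "beta_star p j (Om (z l)) = beta l" unfolding beta_def by simp
    show "sqnorm p j (\<lambda>i. bt i - beta_star p j (Om (z l)) i)
               \<le> c * exp (- 2 * (delta n z l)\<^sup>2 / tau\<^sup>2
                          + 2 * ln (real n / real (nlev n z l) - 1)) * real (s j)"
    proof (cases "s j = 0")
      case True
      have "l0 p j bt = 0" using bt True by simp
      note z1 = l0z[OF this]
      have "l0 p j (beta l) \<le> s j" using H l j unfolding beta_def by blast
      hence "l0 p j (beta l) = 0" using True by simp
      note z2 = l0z[OF this]
      have "sqnorm p j (\<lambda>i. bt i - beta_star p j (Om (z l)) i) = 0"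
        unfolding sqnorm_def betal using z1 z2 by (intro sum.neutral) auto
      thus ?thesis using True by simp
    next
      case False
      hence s1: "1 \<le> real (s j)" by simp
      have feas: "in_Rpm1 p j (beta l) \<and> real (l0 p j (beta l)) \<le> C0 * real (s j)"
      proof
        show "in_Rpm1 p j (beta l)" unfolding in_Rpm1_def beta_def beta_star_def by simp
        have "l0 p j (beta l) \<le> s j" using H l j unfolding beta_def by auto
        hence "real (l0 p j (beta l)) \<le> 1 * real (s j)" by simp
        also have "\<dots> \<le> C0 * real (s j)" using assms(6) by (intro mult_right_mono) auto
        finally show "real (l0 p j (beta l)) \<le> C0 * real (s j)" .
      qed
      hence opt0: "obj n p z Om Sig cw tau j l bt \<le> obj n p z Om Sig cw tau j l (beta l)" using bt by blast
      have o1: "obj n p z Om Sig cw tau j l bt = (\<Sum>k\<in>K. w k * Bf p (Sf k) (\<lambda>i. e k i - d i) (\<lambda>i. e k i - d i))"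
        unfolding obj_def K_def
      proof (rule sum.cong[OF refl])
        fix k
        have eq: "(\<lambda>i. e k i - d i) = (\<lambda>i. beta_star p j (Om (z k)) i - bt i)"
          unfolding e_def d_def beta_def by auto
        show "wgt cw z tau l k * quad_mj p j (Sig (z k)) (\<lambda>i. beta_star p j (Om (z k)) i - bt i) =
          w k * Bf p (Sf k) (\<lambda>i. e k i - d i) (\<lambda>i. e k i - d i)"
          unfolding eq w_def Sf_def using j btj
          by (subst quad_Bf) (simp_all add: beta_star_def)
      qed
      have o2: "obj n p z Om Sig cw tau j l (beta l) = (\<Sum>k\<in>K. w k * Bf p (Sf k) (e k) (e k))"
        unfolding obj_def K_def
      proof (rule sum.cong[OF refl])
        fix k
        have eq: "e k = (\<lambda>i. beta_star p j (Om (z k)) i - beta l i)"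
          unfolding e_def beta_def by auto
        show "wgt cw z tau l k * quad_mj p j (Sig (z k)) (\<lambda>i. beta_star p j (Om (z k)) i - beta l i) =
          w k * Bf p (Sf k) (e k) (e k)"
          unfolding eq w_def Sf_def using j bj0
          by (subst quad_Bf) (simp_all add: beta_star_def)
      qed
      have Wpos: "0 < (\<Sum>k\<in>L. w k)" unfolding WL using nL1 w0p by simp
      have cb: "Nf p d \<le> 4 * b\<^sup>2 * E * (\<Sum>k\<in>K - L. w k)\<^sup>2 / ((\<Sum>k\<in>L. w k) * a)\<^sup>2"
      proof (rule core[OF finK LK wnn Wpos _ a0 _ _ b0])
        show "\<forall>k\<in>K. \<forall>u v. Bf p (Sf k) u v = Bf p (Sf k) v u" using LB unfolding K_def by blast
        show "\<forall>k\<in>L. \<forall>x. a * Nf p x \<le> Bf p (Sf k) x x"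
        proof (intro ballI allI)
          fix k x assume "k \<in> L" hence "k < n" unfolding L_def by simp
          hence "Nf p x \<le> lmax * Bf p (Sf k) x x" using LB by blast
          thus "a * Nf p x \<le> Bf p (Sf k) x x" unfolding a_def using lmax0 by (simp add: field_simps)
        qed
        show "\<forall>k\<in>K. \<forall>x. 0 \<le> Bf p (Sf k) x x"
        proof (intro ballI allI)
          fix k x assume "k \<in> K" hence "k < n" unfolding K_def by simp
          hence "Nf p x \<le> lmax * Bf p (Sf k) x x" using LB by blast
          hence "0 \<le> lmax * Bf p (Sf k) x x" using Nf_nonneg[of p x] by linarith
          thus "0 \<le> Bf p (Sf k) x x" using lmax0 by (simp add: zero_le_mult_iff)
        qed
        show "\<forall>k\<in>K. \<forall>x. Bf p (Sf k) x x \<le> b * Nf p x"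
        proof (intro ballI allI)
          fix k x assume "k \<in> K" hence "k < n" unfolding K_def by simp
          hence "lmin * Bf p (Sf k) x x \<le> Nf p x" using LB by blast
          thus "Bf p (Sf k) x x \<le> b * Nf p x" unfolding b_def using assms(1) by (simp add: field_simps)
        qed
        show "\<forall>k\<in>L. \<forall>i<p. e k i = 0" unfolding L_def e_def beta_def by simp
        show "\<forall>k\<in>K - L. Nf p (e k) \<le> E"
        proof
          fix k assume "k \<in> K - L" hence k: "k < n" unfolding K_def by simp
          have "Nf p (e k) \<le> 2 * Nf p (beta k) + 2 * Nf p (beta l)" unfolding e_def by (rule Nf_diff)
          also have "\<dots> \<le> 2 * (lmax\<^sup>2 / lmin\<^sup>2) + 2 * (lmax\<^sup>2 / lmin\<^sup>2)"
            using LB[OF k] LB[OF l] by (meson add_mono mult_left_mono zero_le_numeral)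
          finally show "Nf p (e k) \<le> E" unfolding E_def by simp
        qed
        show "(\<Sum>k\<in>K. w k * Bf p (Sf k) (\<lambda>i. e k i - d i) (\<lambda>i. e k i - d i))
              \<le> (\<Sum>k\<in>K. w k * Bf p (Sf k) (e k) (e k))" using opt0 o1 o2 by simp
      qed
      define q where "q = real n / real nL - 1"
      have q0: "0 < q" unfolding q_def using nLn nL1 by (simp add: field_simps)
      have qeq: "real (n - nL) = q * nL" unfolding q_def using nLn nL1 by (simp add: field_simps of_nat_diff)
      have R2: "(\<Sum>k\<in>K - L. w k)\<^sup>2 \<le> ((n - nL) * (w0 * eps))\<^sup>2"
        using power_mono[OF RKL R0] by simp
      have cb2: "Nf p d \<le> 4 * b\<^sup>2 * E * (\<Sum>k\<in>K - L. w k)\<^sup>2 / ((nL * w0) * a)\<^sup>2"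
        using cb unfolding WL .
      also have "\<dots> \<le> 4 * b\<^sup>2 * E * ((n - nL) * (w0 * eps))\<^sup>2 / ((nL * w0) * a)\<^sup>2"
        using R2 E0 by (intro divide_right_mono mult_left_mono) simp_all
      also have "\<dots> = c * eps\<^sup>2 * q\<^sup>2"
        unfolding c_def qeq using nL1 w0p a0 by (simp add: field_simps power2_eq_square)
      finally have Nd: "Nf p d \<le> c * eps\<^sup>2 * q\<^sup>2" .
      have ex: "exp (- 2 * (delta n z l)\<^sup>2 / tau\<^sup>2 + 2 * ln (real n / real (nlev n z l) - 1)) = eps\<^sup>2 * q\<^sup>2"
      proof -
        have "- 2 * (delta n z l)\<^sup>2 / tau\<^sup>2 + 2 * ln (real n / real (nlev n z l) - 1)
            = (- (dl\<^sup>2 / tau\<^sup>2) + ln q) + (- (dl\<^sup>2 / tau\<^sup>2) + ln q)"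
          unfolding dl_def q_def nL_def by simp
        also have "exp \<dots> = (eps * q) * (eps * q)" unfolding exp_add eps_def using q0 by simp
        finally show ?thesis by (simp add: power2_eq_square)
      qed
      have "sqnorm p j (\<lambda>i. bt i - beta_star p j (Om (z l)) i) = Nf p d"
        unfolding betal d_def using btj bj0 j by (subst sqnorm_Nf) simp_all
      also have "\<dots> \<le> c * eps\<^sup>2 * q\<^sup>2" by (rule Nd)
      also have "\<dots> \<le> c * eps\<^sup>2 * q\<^sup>2 * real (s j)"
        using mult_left_mono[OF s1, of "c * eps\<^sup>2 * q\<^sup>2"] c0 by simp
      finally show ?thesis unfolding ex by (simp add: mult.assoc)
    qed
  qed
qed

end
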